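(* Let $z^{(L)}:\mathbb{R}^{n_0}\to\mathbb{R}$ be a scalar-valued $L$-layer network given by $a^{(0)}=x$, $z^{(k)}=W^{(k)}a^{(k-1)}+b^{(k)}$, $a^{(k)}=\sigma^{(k)}(z^{(k)})$ for $k=1,\dots,L-1$, and $z^{(L)}=W^{(L)}a^{(L-1)}+b^{(L)}$ with $W^{(L)}\in\mathbb{R}^{1\times n_{L-1}}$, where each activation $\sigma^{(k)}_i$ is differentiable and slope-restricted in $[\alpha^{(k)}_i,\beta^{(k)}_i]$ with $0\le\alpha^{(k)}_i\le\beta^{(k)}_i<\infty$. Fix $l\in\{1,\dots,L-1\}$ and regard $z^{(L)}$ as a function of $a^{(l)}$ through layers $l+1,\dots,L$. Define matrices $S^{(k,l)}$ for $k=l+1,\dots,L$ by $$S^{(l+1,l)}=|W^{(l+1)}|,\qquad S^{(k,l)}=|W^{(k)}|\,\mathrm{diag}(\beta^{(k-1)})\,S^{(k-1,l)}\quad (k\ge l+2).$$ Then $\Big\|\big(\frac{\partial z^{(L)}}{\partial a^{(l)}}\big)^\top\Big\|_\infty\le\|S^{(L,l)}\|_\infty$ at every point.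
   Context: $|A|$ denotes the elementwise absolute value of a matrix $A$. A function $\sigma:\mathbb{R}\to\mathbb{R}$ is slope-restricted in $[\alpha,\beta]$ if $\alpha\le\frac{\sigma(x)-\sigma(y)}{x-y}\le\beta$ for all $x\ne y$. For a matrix $A$, $\|A\|_\infty$ is the induced $\ell_\infty$ operator norm (maximum absolute row sum). *)

theory Defs
  imports "HOL-Analysis.Analysis"
begin

text \<open>Vectors in R^n are functions nat => real (only indices < n matter);
  m x n matrices are functions nat => nat => real (row i < m, column j < n).\<close>

definition slope_restricted :: "(real \<Rightarrow> real) \<Rightarrow> real \<Rightarrow> real \<Rightarrow> bool" where
  "slope_restricted f \<alpha> \<beta> \<longleftrightarrow>
     (\<forall>x y. x \<noteq> y \<longrightarrow> \<alpha> \<le> (f x - f y) / (x - y) \<and> (f x - f y) / (x - y) \<le> \<beta>)"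

definition mat_inf_norm :: "nat \<Rightarrow> nat \<Rightarrow> (nat \<Rightarrow> nat \<Rightarrow> real) \<Rightarrow> real" where
  "mat_inf_norm m n A = Max {(\<Sum>j<n. \<bar>A i j\<bar>) | i. i < m}"

text \<open>Forward pass starting from layer l: layer_act ... l m a is the post-activation
  a^(l+m), given a^(l) = a.\<close>
fun layer_act :: "(nat \<Rightarrow> nat) \<Rightarrow> (nat \<Rightarrow> nat \<Rightarrow> nat \<Rightarrow> real) \<Rightarrow> (nat \<Rightarrow> nat \<Rightarrow> real)
    \<Rightarrow> (nat \<Rightarrow> nat \<Rightarrow> real \<Rightarrow> real) \<Rightarrow> nat \<Rightarrow> nat \<Rightarrow> (nat \<Rightarrow> real) \<Rightarrow> (nat \<Rightarrow> real)" where
  "layer_act n W b \<sigma> l 0 a = a"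
| "layer_act n W b \<sigma> l (Suc m) a =
     (\<lambda>i. if i < n (l + Suc m)
          then \<sigma> (l + Suc m) i ((\<Sum>j<n (l + m). W (l + Suc m) i j * layer_act n W b \<sigma> l m a j)
                                 + b (l + Suc m) i)
          else 0)"

definition net_out :: "(nat \<Rightarrow> nat) \<Rightarrow> (nat \<Rightarrow> nat \<Rightarrow> nat \<Rightarrow> real) \<Rightarrow> (nat \<Rightarrow> nat \<Rightarrow> real)
    \<Rightarrow> (nat \<Rightarrow> nat \<Rightarrow> real \<Rightarrow> real) \<Rightarrow> nat \<Rightarrow> nat \<Rightarrow> (nat \<Rightarrow> real) \<Rightarrow> real" where
  "net_out n W b \<sigma> L l a =
     (\<Sum>j<n (L - 1). W L 0 j * layer_act n W b \<sigma> l (L - 1 - l) a j) + b L 0"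

text \<open>S_mat ... l m = S^(l+1+m, l):
  S^(l+1,l) = |W^(l+1)|, S^(k,l) = |W^(k)| diag(beta^(k-1)) S^(k-1,l).\<close>
fun S_mat :: "(nat \<Rightarrow> nat) \<Rightarrow> (nat \<Rightarrow> nat \<Rightarrow> nat \<Rightarrow> real) \<Rightarrow> (nat \<Rightarrow> nat \<Rightarrow> real)
    \<Rightarrow> nat \<Rightarrow> nat \<Rightarrow> (nat \<Rightarrow> nat \<Rightarrow> real)" where
  "S_mat n W \<beta> l 0 = (\<lambda>i j. \<bar>W (l + 1) i j\<bar>)"
| "S_mat n W \<beta> l (Suc m) =
     (\<lambda>i j. \<Sum>p<n (l + 1 + m). \<bar>W (l + 2 + m) i p\<bar> * \<beta> (l + 1 + m) p * S_mat n W \<beta> l m p j)"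

end

theory Submission
  imports Defs
begin

lemma slope_deriv:
  assumes "slope_restricted f al be" "(f has_real_derivative D) (at x)"
  shows "al \<le> D \<and> D \<le> be"
proof -
  have lim: "((\<lambda>h. (f (x + h) - f x) / h) \<longlongrightarrow> D) (at 0)"
    using assms(2) by (simp add: DERIV_def)
  have ev: "eventually (\<lambda>h. al \<le> (f (x + h) - f x) / h \<and> (f (x + h) - f x) / h \<le> be) (at (0::real))"
  proof -
    have "eventually (\<lambda>h::real. h \<noteq> 0) (at 0)" by (simp add: eventually_at_filter)
    then show ?thesis
    proof (rule eventually_mono)
      fix h :: real assume "h \<noteq> 0"
      then show "al \<le> (f (x + h) - f x) / h \<and> (f (x + h) - f x) / h \<le> be"
        using assms(1) unfolding slope_restricted_def
        by (metis add_diff_cancel_left' add_cancel_right_right)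
    qed
  qed
  have "al \<le> D" by (rule tendsto_lowerbound[OF lim]) (use ev in \<open>auto elim: eventually_mono\<close>)
  moreover have "D \<le> be" by (rule tendsto_upperbound[OF lim]) (use ev in \<open>auto elim: eventually_mono\<close>)
  ultimately show ?thesis by simp
qed

lemma deriv_bound:
  assumes diff: "\<forall>k\<in>{1..L-1}. \<forall>i<n k. \<forall>x. \<sigma> k i differentiable (at x)"
    and slope: "\<forall>k\<in>{1..L-1}. \<forall>i<n k. slope_restricted (\<sigma> k i) (\<alpha> k i) (\<beta> k i)"
    and bounds: "\<forall>k\<in>{1..L-1}. \<forall>i<n k. 0 \<le> \<alpha> k i \<and> \<alpha> k i \<le> \<beta> k i"
    and j: "j < n l" and lm: "l + m \<le> L - 1" and l1: "1 \<le> l"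
  shows "\<exists>D. ((\<lambda>t. (\<Sum>p<n (l+m). W (Suc (l+m)) i p * layer_act n W b \<sigma> l m (a(j:=a j+t)) p)
             + b (Suc (l+m)) i) has_real_derivative D) (at 0) \<and> \<bar>D\<bar> \<le> S_mat n W \<beta> l m i j"
  using lm
proof (induction m arbitrary: i)
  case 0
  have "((\<lambda>t. (\<Sum>p<n l. W (Suc l) i p * (a(j:=a j+t)) p) + b (Suc l) i) has_real_derivative
        (\<Sum>p<n l. W (Suc l) i p * (if p = j then 1 else 0)) + 0) (at 0)"
  proof -
    have d: "((\<lambda>t. (a(j:=a j+t)) p) has_real_derivative (if p = j then 1 else 0)) (at 0)" for p
      by (cases "p = j") (auto intro!: derivative_eq_intros)
    show ?thesis by (intro DERIV_add DERIV_sum DERIV_cmult d DERIV_const)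
  qed
  moreover have "(\<Sum>p<n l. W (Suc l) i p * (if p = j then 1 else 0)) = W (Suc l) i j"
    using j by (simp add: if_distrib cong: if_cong)
  ultimately show ?case by auto
next
  case (Suc m)
  let ?Z = "\<lambda>p t. (\<Sum>q<n (l+m). W (Suc (l+m)) p q * layer_act n W b \<sigma> l m (a(j:=a j+t)) q) + b (Suc (l+m)) p"
  have "\<forall>p. \<exists>D. ((?Z p) has_real_derivative D) (at 0) \<and> \<bar>D\<bar> \<le> S_mat n W \<beta> l m p j"
  proof
    fix p show "\<exists>D. ((?Z p) has_real_derivative D) (at 0) \<and> \<bar>D\<bar> \<le> S_mat n W \<beta> l m p j"
      by (rule Suc.IH) (use Suc.prems in simp)
  qed
  from choice[OF this] obtain Dz where Dz': "\<forall>p. ((?Z p) has_real_derivative Dz p) (at 0) \<and> \<bar>Dz p\<bar> \<le> S_mat n W \<beta> l m p j"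
    by blast
  have Dz: "\<And>p. ((?Z p) has_real_derivative Dz p) (at 0)" "\<And>p. \<bar>Dz p\<bar> \<le> S_mat n W \<beta> l m p j"
    using Dz' by auto
  have k: "Suc (l+m) \<in> {1..L-1}" using Suc.prems by auto
  have "\<forall>p. \<exists>s. p < n (Suc (l+m)) \<longrightarrow> (\<sigma> (Suc (l+m)) p has_real_derivative s) (at (?Z p 0))"
  proof
    fix p show "\<exists>s. p < n (Suc (l+m)) \<longrightarrow> (\<sigma> (Suc (l+m)) p has_real_derivative s) (at (?Z p 0))"
    proof (cases "p < n (Suc (l+m))")
      case True
      then have "\<sigma> (Suc (l+m)) p differentiable (at (?Z p 0))" using diff k by blast
      then show ?thesis unfolding real_differentiable_def by blast
    qed simp
  qed
  from choice[OF this] obtain sd where sd': "\<forall>p. p < n (Suc (l+m)) \<longrightarrow> (\<sigma> (Suc (l+m)) p has_real_derivative sd p) (at (?Z p 0))"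
    by blast
  have sd: "\<And>p. p < n (Suc (l+m)) \<Longrightarrow> (\<sigma> (Suc (l+m)) p has_real_derivative sd p) (at (?Z p 0))"
    using sd' by blast
  have sdb: "0 \<le> sd p \<and> sd p \<le> \<beta> (Suc (l+m)) p" if "p < n (Suc (l+m))" for p
  proof -
    have "slope_restricted (\<sigma> (Suc (l+m)) p) (\<alpha> (Suc (l+m)) p) (\<beta> (Suc (l+m)) p)"
      using slope k that by blast
    from slope_deriv[OF this sd[OF that]] have "\<alpha> (Suc (l+m)) p \<le> sd p \<and> sd p \<le> \<beta> (Suc (l+m)) p" .
    moreover have "0 \<le> \<alpha> (Suc (l+m)) p" using bounds k that by blast
    ultimately show ?thesis by linarith
  qed
  define Da where "Da p = (if p < n (Suc (l+m)) then sd p * Dz p else 0)" for p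
  have la: "((\<lambda>t. layer_act n W b \<sigma> l (Suc m) (a(j:=a j+t)) p) has_real_derivative Da p) (at 0)" for p
  proof (cases "p < n (Suc (l+m))")
    case True
    then show ?thesis
      using DERIV_chain2[OF sd[OF True] Dz(1)[of p]] by (simp add: Da_def)
  next
    case False
    then show ?thesis by (simp add: Da_def)
  qed
  have deriv: "((\<lambda>t. (\<Sum>p<n (l+Suc m). W (Suc (l+Suc m)) i p * layer_act n W b \<sigma> l (Suc m) (a(j:=a j+t)) p)
             + b (Suc (l+Suc m)) i) has_real_derivative
        (\<Sum>p<n (l+Suc m). W (Suc (l+Suc m)) i p * Da p) + 0) (at 0)"
    by (intro DERIV_add DERIV_sum DERIV_cmult la DERIV_const)
  have bnd: "\<bar>\<Sum>p<n (l+Suc m). W (Suc (l+Suc m)) i p * Da p\<bar> \<le> S_mat n W \<beta> l (Suc m) i j"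
  proof -
    have "\<bar>\<Sum>p<n (l+Suc m). W (Suc (l+Suc m)) i p * Da p\<bar> \<le> (\<Sum>p<n (l+Suc m). \<bar>W (Suc (l+Suc m)) i p * Da p\<bar>)"
      by (rule sum_abs)
    also have "\<dots> \<le> (\<Sum>p<n (l+Suc m). \<bar>W (Suc (l+Suc m)) i p\<bar> * \<beta> (Suc (l + m)) p * S_mat n W \<beta> l m p j)"
    proof (rule sum_mono)
      fix p assume "p \<in> {..<n (l+Suc m)}"
      then have p: "p < n (Suc (l+m))" by simp
      have "\<bar>Da p\<bar> = sd p * \<bar>Dz p\<bar>" using sdb[OF p] p by (simp add: Da_def abs_mult)
      also have "\<dots> \<le> \<beta> (Suc (l+m)) p * S_mat n W \<beta> l m p j"
        using sdb[OF p] Dz(2)[of p] by (intro mult_mono) auto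
      finally have "\<bar>Da p\<bar> \<le> \<beta> (Suc (l+m)) p * S_mat n W \<beta> l m p j" .
      then show "\<bar>W (Suc (l+Suc m)) i p * Da p\<bar> \<le> \<bar>W (Suc (l+Suc m)) i p\<bar> * \<beta> (Suc (l + m)) p * S_mat n W \<beta> l m p j"
        by (simp add: abs_mult mult.assoc mult_left_mono)
    qed
    also have "\<dots> = S_mat n W \<beta> l (Suc m) i j" by simp
    finally show ?thesis .
  qed
  show ?case
  proof (intro exI conjI)
    show "((\<lambda>t. (\<Sum>p<n (l+Suc m). W (Suc (l+Suc m)) i p * layer_act n W b \<sigma> l (Suc m) (a(j:=a j+t)) p)
             + b (Suc (l+Suc m)) i) has_real_derivative (\<Sum>p<n (l+Suc m). W (Suc (l+Suc m)) i p * Da p)) (at 0)"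
      using deriv by (simp only: add_0_right)
  qed (rule bnd)
qed

theorem proposition2:
  fixes n :: "nat \<Rightarrow> nat"
    and W :: "nat \<Rightarrow> nat \<Rightarrow> nat \<Rightarrow> real"
    and b :: "nat \<Rightarrow> nat \<Rightarrow> real"
    and \<sigma> :: "nat \<Rightarrow> nat \<Rightarrow> real \<Rightarrow> real"
    and \<alpha> \<beta> :: "nat \<Rightarrow> nat \<Rightarrow> real"
    and L l :: nat
    and a :: "nat \<Rightarrow> real"
  assumes widths: "\<forall>k\<le>L. n k \<ge> 1"
    and scalar_out: "n L = 1"
    and l_range: "1 \<le> l" "l \<le> L - 1"
    and diff: "\<forall>k\<in>{1..L-1}. \<forall>i<n k. \<forall>x. \<sigma> k i differentiable (at x)"
    and slope: "\<forall>k\<in>{1..L-1}. \<forall>i<n k. slope_restricted (\<sigma> k i) (\<alpha> k i) (\<beta> k i)"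
    and bounds: "\<forall>k\<in>{1..L-1}. \<forall>i<n k. 0 \<le> \<alpha> k i \<and> \<alpha> k i \<le> \<beta> k i"
  shows "\<exists>G :: nat \<Rightarrow> real.
           (\<forall>j<n l. ((\<lambda>t. net_out n W b \<sigma> L l (a(j := a j + t))) has_real_derivative G j) (at 0))
         \<and> mat_inf_norm (n l) 1 (\<lambda>i _. G i) \<le> mat_inf_norm 1 (n l) (S_mat n W \<beta> l (L - l - 1))"
  proof -
  have L1: "l + (L - 1 - l) = L - 1" and L2: "Suc (L - 1) = L" using l_range by auto
  have ex: "\<forall>j. \<exists>D. j < n l \<longrightarrow> ((\<lambda>t. net_out n W b \<sigma> L l (a(j := a j + t))) has_real_derivative D) (at 0)
              \<and> \<bar>D\<bar> \<le> S_mat n W \<beta> l (L - l - 1) 0 j"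
  proof
    fix j show "\<exists>D. j < n l \<longrightarrow> ((\<lambda>t. net_out n W b \<sigma> L l (a(j := a j + t))) has_real_derivative D) (at 0)
              \<and> \<bar>D\<bar> \<le> S_mat n W \<beta> l (L - l - 1) 0 j"
    proof (cases "j < n l")
      case True
      have "\<exists>D. ((\<lambda>t. (\<Sum>p<n (l+(L - 1 - l)). W (Suc (l+(L - 1 - l))) 0 p * layer_act n W b \<sigma> l (L - 1 - l) (a(j:=a j+t)) p)
             + b (Suc (l+(L - 1 - l))) 0) has_real_derivative D) (at 0) \<and> \<bar>D\<bar> \<le> S_mat n W \<beta> l (L - 1 - l) 0 j"
        by (rule deriv_bound[OF diff slope bounds True]) (use l_range in auto)
      then have "\<exists>D. ((\<lambda>t. (\<Sum>p<n (L - 1). W L 0 p * layer_act n W b \<sigma> l (L - 1 - l) (a(j:=a j+t)) p)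
             + b L 0) has_real_derivative D) (at 0) \<and> \<bar>D\<bar> \<le> S_mat n W \<beta> l (L - l - 1) 0 j"
        unfolding L1 L2 by (simp only: diff_commute[of L 1 l])
      then show ?thesis unfolding net_out_def by blast
    qed simp
  qed
  from choice[OF ex] obtain G where G: "\<forall>j. j < n l \<longrightarrow> ((\<lambda>t. net_out n W b \<sigma> L l (a(j := a j + t))) has_real_derivative G j) (at 0)
              \<and> \<bar>G j\<bar> \<le> S_mat n W \<beta> l (L - l - 1) 0 j" by blast
  have nl: "n l \<ge> 1" using widths l_range by auto
  have lhs: "mat_inf_norm (n l) 1 (\<lambda>i _. G i) = Max {\<bar>G i\<bar> | i. i < n l}"
    unfolding mat_inf_norm_def by simp
  have rhs: "mat_inf_norm 1 (n l) (S_mat n W \<beta> l (L - l - 1)) = (\<Sum>j<n l. \<bar>S_mat n W \<beta> l (L - l - 1) 0 j\<bar>)"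
    unfolding mat_inf_norm_def by simp
  have fin: "finite {\<bar>G i\<bar> | i. i < n l}" by simp
  have ne: "{\<bar>G i\<bar> | i. i < n l} \<noteq> {}" using nl by (auto intro!: exI[of _ 0])
  have "Max {\<bar>G i\<bar> | i. i < n l} \<le> (\<Sum>j<n l. \<bar>S_mat n W \<beta> l (L - l - 1) 0 j\<bar>)"
  proof (subst Max_le_iff[OF fin ne], safe)
    fix i assume i: "i < n l"
    have "\<bar>G i\<bar> \<le> \<bar>S_mat n W \<beta> l (L - l - 1) 0 i\<bar>" using G i by force
    also have "\<dots> \<le> (\<Sum>j<n l. \<bar>S_mat n W \<beta> l (L - l - 1) 0 j\<bar>)"
      by (rule member_le_sum) (use i in auto)
    finally show "\<bar>G i\<bar> \<le> (\<Sum>j<n l. \<bar>S_mat n W \<beta> l (L - l - 1) 0 j\<bar>)" .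
  qed
  then show ?thesis using G lhs rhs by auto
qed

end
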